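(* Let $\mathcal{C}$ be an amendable category (having the pullbacks and pushouts required for PBPO rules and steps). Then for any canonical PBPO rule $\rho$ there exists a monic PBPO rule $\sigma$ such that ${\Rightarrow^{\rightarrowtail}_\rho} = {\Rightarrow_\sigma}$. If $\mathcal{C}$ is moreover strongly amendable, then additionally ${\Rightarrow^{\rightarrowtail}_\rho} = {\Rightarrow^{\mathrm{SM}}_\sigma}$.
   Context: A PBPO rule consists of objects $L,K,R,L',K',R'$ and morphisms $l : K \to L$, $r : K \to R$, $t_L : L \to L'$, $t_K : K \to K'$, $t_R : R \to R'$, $l' : K' \to L'$, $r' : K' \to R'$ with $t_L \circ l = l' \circ t_K$ and $t_R \circ r = r' \circ t_K$. It is canonical if $L \xleftarrow{l} K \xrightarrow{t_K} K'$ is a pullback of $t_L, l'$ and $K' \xrightarrow{r'} R' \xleftarrow{t_R} R$ is a pushout of $t_K, r$; it is monic if it is canonical and $t_L$ is a monomorphism. A PBPO rewrite step $G_L \Rightarrow_\rho^{m,\alpha} G_R$ is given by $m : L \to G_L$, $\alpha : G_L \to L'$ with $t_L = \alpha \circ m$; a pullback $G_L \xleftarrow{g_L} G_K \xrightarrow{u'} K'$ of $\alpha$ and $l'$; the unique $u : K \to G_K$ with $g_L \circ u = m \circ l$, $u' \circ u = t_K$; and a pushout $G_K \xrightarrow{g_R} G_R \xleftarrow{w} R$ of $u$ and $r$ (with the induced $w' : G_R \to R'$). ${\Rightarrow_\rho}$ is the relation $\{(G_L,G_R) \mid \exists m,\alpha.\ G_L \Rightarrow^{m,\alpha}_\rho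 G_R\}$; ${\Rightarrow^{\rightarrowtail}_\rho}$ is its restriction to steps with $m$ monic; ${\Rightarrow^{\mathrm{SM}}_\rho}$ is its restriction to steps where $L \xleftarrow{1_L} L \xrightarrow{m} G_L$ is a pullback of $t_L$ and $\alpha$ (strong match). A category is amendable if for every morphism $t_L : L \to L'$ there is a factorization $t_L = \beta \circ t_L'$ with $t_L' : L \rightarrowtail L''$ mono and $\beta : L'' \to L'$ such that for every factorization $t_L = \alpha \circ m$ with $m : L \rightarrowtail G_L$ mono and $\alpha : G_L \to L'$ there exists $\alpha' : G_L \to L''$ with $\alpha' \circ m = t_L'$ and $\beta \circ \alpha' = \alpha$. It is strongly amendable if moreover the factorization $(t_L',\beta)$ can be chosen so that in each case $L \xleftarrow{1_L} L \xrightarrow{m} G_L$ is a pullback of $t_L'$ and $\alpha'$. *)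

theory Defs
  imports Main
begin

text \<open>A category with object type 'o and arrow type 'a.  comp C g f is the
composite g after f (defined when dom g = cod f).\<close>

record ('o, 'a) cat =
  Obj  :: "'o set"
  Arr  :: "'a set"
  dom  :: "'a \<Rightarrow> 'o"
  cod  :: "'a \<Rightarrow> 'o"
  comp :: "'a \<Rightarrow> 'a \<Rightarrow> 'a"
  idm  :: "'o \<Rightarrow> 'a"

definition category :: "('o, 'a) cat \<Rightarrow> bool" where
  "category C \<longleftrightarrow>
     (\<forall>f\<in>Arr C. dom C f \<in> Obj C \<and> cod C f \<in> Obj C) \<and>
     (\<forall>X\<in>Obj C. idm C X \<in> Arr C \<and> dom C (idm C X) = X \<and> cod C (idm C X) = X) \<and>
     (\<forall>f\<in>Arr C. \<forall>g\<in>Arr C. dom C g = cod C f \<longrightarrow>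
        comp C g f \<in> Arr C \<and> dom C (comp C g f) = dom C f \<and> cod C (comp C g f) = cod C g) \<and>
     (\<forall>f\<in>Arr C. \<forall>g\<in>Arr C. \<forall>h\<in>Arr C. dom C g = cod C f \<longrightarrow> dom C h = cod C g \<longrightarrow>
        comp C h (comp C g f) = comp C (comp C h g) f) \<and>
     (\<forall>f\<in>Arr C. comp C f (idm C (dom C f)) = f \<and> comp C (idm C (cod C f)) f = f)"

definition hom :: "('o, 'a) cat \<Rightarrow> 'a \<Rightarrow> 'o \<Rightarrow> 'o \<Rightarrow> bool" where
  "hom C f X Y \<longleftrightarrow> f \<in> Arr C \<and> dom C f = X \<and> cod C f = Y"

definition mono :: "('o, 'a) cat \<Rightarrow> 'a \<Rightarrow> bool" where
  "mono C m \<longleftrightarrow> m \<in> Arr C \<and>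
     (\<forall>g h. g \<in> Arr C \<and> h \<in> Arr C \<and> dom C g = dom C h \<and> cod C g = dom C m \<and>
        cod C h = dom C m \<and> comp C m g = comp C m h \<longrightarrow> g = h)"

text \<open>is_pullback C f g p q: the span (p : P \<rightarrow> A, q : P \<rightarrow> B) is a pullback of the
cospan (f : A \<rightarrow> Z, g : B \<rightarrow> Z).\<close>

definition is_pullback :: "('o, 'a) cat \<Rightarrow> 'a \<Rightarrow> 'a \<Rightarrow> 'a \<Rightarrow> 'a \<Rightarrow> bool" where
  "is_pullback C f g p q \<longleftrightarrow>
     f \<in> Arr C \<and> g \<in> Arr C \<and> p \<in> Arr C \<and> q \<in> Arr C \<and>
     cod C f = cod C g \<and> dom C p = dom C q \<and> cod C p = dom C f \<and> cod C q = dom C g \<and>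
     comp C f p = comp C g q \<and>
     (\<forall>x y. x \<in> Arr C \<and> y \<in> Arr C \<and> dom C x = dom C y \<and> cod C x = dom C f \<and>
        cod C y = dom C g \<and> comp C f x = comp C g y \<longrightarrow>
        (\<exists>!u. u \<in> Arr C \<and> dom C u = dom C x \<and> cod C u = dom C p \<and>
              comp C p u = x \<and> comp C q u = y))"

text \<open>is_pushout C f g p q: the cospan (p : B \<rightarrow> P, q : D \<rightarrow> P) is a pushout of the
span (f : A \<rightarrow> B, g : A \<rightarrow> D).\<close>

definition is_pushout :: "('o, 'a) cat \<Rightarrow> 'a \<Rightarrow> 'a \<Rightarrow> 'a \<Rightarrow> 'a \<Rightarrow> bool" where
  "is_pushout C f g p q \<longleftrightarrow>
     f \<in> Arr C \<and> g \<in> Arr C \<and> p \<in> Arr C \<and> q \<in> Arr C \<and>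
     dom C f = dom C g \<and> cod C p = cod C q \<and> dom C p = cod C f \<and> dom C q = cod C g \<and>
     comp C p f = comp C q g \<and>
     (\<forall>x y. x \<in> Arr C \<and> y \<in> Arr C \<and> cod C x = cod C y \<and> dom C x = cod C f \<and>
        dom C y = cod C g \<and> comp C x f = comp C y g \<longrightarrow>
        (\<exists>!u. u \<in> Arr C \<and> dom C u = cod C p \<and> cod C u = cod C x \<and>
              comp C u p = x \<and> comp C u q = y))"

definition has_pullbacks :: "('o, 'a) cat \<Rightarrow> bool" where
  "has_pullbacks C \<longleftrightarrow> (\<forall>f\<in>Arr C. \<forall>g\<in>Arr C. cod C f = cod C g \<longrightarrow>
      (\<exists>p q. is_pullback C f g p q))"

definition has_pushouts :: "('o, 'a) cat \<Rightarrow> bool" where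
  "has_pushouts C \<longleftrightarrow> (\<forall>f\<in>Arr C. \<forall>g\<in>Arr C. dom C f = dom C g \<longrightarrow>
      (\<exists>p q. is_pushout C f g p q))"

text \<open>A rule is given by its seven morphisms; the objects are
L = cod l, K = dom l, R = cod r, L' = cod tL, K' = dom l', R' = cod r'.\<close>

record 'a pbpo_rule =
  r_l  :: 'a
  r_r  :: 'a
  r_tL :: 'a
  r_tK :: 'a
  r_tR :: 'a
  r_l' :: 'a
  r_r' :: 'a

definition pbpo_rule :: "('o, 'a) cat \<Rightarrow> 'a pbpo_rule \<Rightarrow> bool" where
  "pbpo_rule C \<rho> \<longleftrightarrow>
     (let L = cod C (r_l \<rho>); K = dom C (r_l \<rho>); R = cod C (r_r \<rho>);
          L' = cod C (r_tL \<rho>); K' = dom C (r_l' \<rho>); R' = cod C (r_r' \<rho>) in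
      hom C (r_l \<rho>) K L \<and> hom C (r_r \<rho>) K R \<and>
      hom C (r_tL \<rho>) L L' \<and> hom C (r_tK \<rho>) K K' \<and> hom C (r_tR \<rho>) R R' \<and>
      hom C (r_l' \<rho>) K' L' \<and> hom C (r_r' \<rho>) K' R' \<and>
      comp C (r_tL \<rho>) (r_l \<rho>) = comp C (r_l' \<rho>) (r_tK \<rho>) \<and>
      comp C (r_tR \<rho>) (r_r \<rho>) = comp C (r_r' \<rho>) (r_tK \<rho>))"

definition canonical_rule :: "('o, 'a) cat \<Rightarrow> 'a pbpo_rule \<Rightarrow> bool" where
  "canonical_rule C \<rho> \<longleftrightarrow> pbpo_rule C \<rho> \<and>
     is_pullback C (r_tL \<rho>) (r_l' \<rho>) (r_l \<rho>) (r_tK \<rho>) \<and>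
     is_pushout C (r_tK \<rho>) (r_r \<rho>) (r_r' \<rho>) (r_tR \<rho>)"

definition monic_rule :: "('o, 'a) cat \<Rightarrow> 'a pbpo_rule \<Rightarrow> bool" where
  "monic_rule C \<rho> \<longleftrightarrow> canonical_rule C \<rho> \<and> mono C (r_tL \<rho>)"

definition pbpo_step ::
  "('o, 'a) cat \<Rightarrow> 'a pbpo_rule \<Rightarrow> 'a \<Rightarrow> 'a \<Rightarrow> 'o \<Rightarrow> 'o \<Rightarrow> bool" where
  "pbpo_step C \<rho> m \<alpha> GL GR \<longleftrightarrow>
     pbpo_rule C \<rho> \<and>
     hom C m (cod C (r_l \<rho>)) GL \<and> hom C \<alpha> GL (cod C (r_tL \<rho>)) \<and>
     r_tL \<rho> = comp C \<alpha> m \<and>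
     (\<exists>gL u' u gR w.
        is_pullback C \<alpha> (r_l' \<rho>) gL u' \<and>
        hom C u (dom C (r_l \<rho>)) (dom C gL) \<and>
        comp C gL u = comp C m (r_l \<rho>) \<and> comp C u' u = r_tK \<rho> \<and>
        is_pushout C u (r_r \<rho>) gR w \<and> cod C gR = GR)"

definition strong_match :: "('o, 'a) cat \<Rightarrow> 'a pbpo_rule \<Rightarrow> 'a \<Rightarrow> 'a \<Rightarrow> bool" where
  "strong_match C \<rho> m \<alpha> \<longleftrightarrow>
     is_pullback C (r_tL \<rho>) \<alpha> (idm C (cod C (r_l \<rho>))) m"

definition pbpo_rel :: "('o, 'a) cat \<Rightarrow> 'a pbpo_rule \<Rightarrow> ('o \<times> 'o) set" where
  "pbpo_rel C \<rho> = {(GL, GR). \<exists>m \<alpha>. pbpo_step C \<rho> m \<alpha> GL GR}"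

definition pbpo_rel_mono :: "('o, 'a) cat \<Rightarrow> 'a pbpo_rule \<Rightarrow> ('o \<times> 'o) set" where
  "pbpo_rel_mono C \<rho> = {(GL, GR). \<exists>m \<alpha>. mono C m \<and> pbpo_step C \<rho> m \<alpha> GL GR}"

definition pbpo_rel_SM :: "('o, 'a) cat \<Rightarrow> 'a pbpo_rule \<Rightarrow> ('o \<times> 'o) set" where
  "pbpo_rel_SM C \<rho> = {(GL, GR). \<exists>m \<alpha>. strong_match C \<rho> m \<alpha> \<and> pbpo_step C \<rho> m \<alpha> GL GR}"

definition amendable :: "('o, 'a) cat \<Rightarrow> bool" where
  "amendable C \<longleftrightarrow>
     (\<forall>tL\<in>Arr C. \<exists>tL'' \<beta>.
        mono C tL'' \<and> hom C \<beta> (cod C tL'') (cod C tL) \<and> dom C tL'' = dom C tL \<and>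
        tL = comp C \<beta> tL'' \<and>
        (\<forall>m \<alpha>. mono C m \<and> dom C m = dom C tL \<and> hom C \<alpha> (cod C m) (cod C tL) \<and>
               tL = comp C \<alpha> m \<longrightarrow>
           (\<exists>\<alpha>'. hom C \<alpha>' (cod C m) (cod C tL'') \<and>
                 comp C \<alpha>' m = tL'' \<and> comp C \<beta> \<alpha>' = \<alpha>)))"

definition strongly_amendable :: "('o, 'a) cat \<Rightarrow> bool" where
  "strongly_amendable C \<longleftrightarrow>
     (\<forall>tL\<in>Arr C. \<exists>tL'' \<beta>.
        mono C tL'' \<and> hom C \<beta> (cod C tL'') (cod C tL) \<and> dom C tL'' = dom C tL \<and>
        tL = comp C \<beta> tL'' \<and>
        (\<forall>m \<alpha>. mono C m \<and> dom C m = dom C tL \<and> hom C \<alpha> (cod C m) (cod C tL) \<and>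
               tL = comp C \<alpha> m \<longrightarrow>
           (\<exists>\<alpha>'. hom C \<alpha>' (cod C m) (cod C tL'') \<and>
                 comp C \<alpha>' m = tL'' \<and> comp C \<beta> \<alpha>' = \<alpha> \<and>
                 is_pullback C tL'' \<alpha>' (idm C (dom C tL)) m)))"

end

theory Submission
  imports Defs
begin

lemma cat_comp:
  assumes "category C" "f \<in> Arr C" "g \<in> Arr C" "dom C g = cod C f"
  shows "comp C g f \<in> Arr C" "dom C (comp C g f) = dom C f" "cod C (comp C g f) = cod C g"
  using assms unfolding category_def by blast+

lemma cat_assoc:
  assumes "category C" "f \<in> Arr C" "g \<in> Arr C" "h \<in> Arr C" "dom C g = cod C f" "dom C h = cod C g"
  shows "comp C h (comp C g f) = comp C (comp C h g) f"
  using assms unfolding category_def by blast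

lemma pbD:
  assumes "is_pullback C f g p q"
  shows "f \<in> Arr C" "g \<in> Arr C" "p \<in> Arr C" "q \<in> Arr C"
     "cod C f = cod C g" "dom C p = dom C q" "cod C p = dom C f" "cod C q = dom C g"
     "comp C f p = comp C g q"
  using assms unfolding is_pullback_def by blast+

lemma pb_univ:
  assumes "is_pullback C f g p q"
  shows "\<forall>x y. x \<in> Arr C \<and> y \<in> Arr C \<and> dom C x = dom C y \<and> cod C x = dom C f \<and>
        cod C y = dom C g \<and> comp C f x = comp C g y \<longrightarrow>
        (\<exists>!u. u \<in> Arr C \<and> dom C u = dom C x \<and> cod C u = dom C p \<and>
              comp C p u = x \<and> comp C q u = y)"
  using assms unfolding is_pullback_def apply (elim conjE) by assumption

lemma pb_univ':
  assumes "is_pullback C f g p q" "x \<in> Arr C" "y \<in> Arr C" "dom C x = dom C y" "cod C x = dom C f"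
     "cod C y = dom C g" "comp C f x = comp C g y"
  shows "\<exists>!u. u \<in> Arr C \<and> dom C u = dom C x \<and> cod C u = dom C p \<and> comp C p u = x \<and> comp C q u = y"
  using pb_univ[OF assms(1), THEN spec[where x=x], THEN spec[where x=y]] assms(2-) by simp

lemma pb_ex:
  assumes "is_pullback C f g p q" "x \<in> Arr C" "y \<in> Arr C" "dom C x = dom C y" "cod C x = dom C f"
     "cod C y = dom C g" "comp C f x = comp C g y"
  obtains u where "u \<in> Arr C" "dom C u = dom C x" "cod C u = dom C p" "comp C p u = x" "comp C q u = y"
proof -
  have "\<exists>!u. u \<in> Arr C \<and> dom C u = dom C x \<and> cod C u = dom C p \<and> comp C p u = x \<and> comp C q u = y"
    by (rule pb_univ'[OF assms])
  then show ?thesis using that by blast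
qed

lemma pb_uniq:
  assumes "category C" "is_pullback C f g p q"
    "u1 \<in> Arr C" "cod C u1 = dom C p" "u2 \<in> Arr C" "cod C u2 = dom C p" "dom C u1 = dom C u2"
    "comp C p u1 = comp C p u2" "comp C q u1 = comp C q u2"
  shows "u1 = u2"
proof -
  note D = pbD[OF assms(2)]
  let ?x = "comp C p u1" and ?y = "comp C q u1"
  have x: "?x \<in> Arr C" "dom C ?x = dom C u1" "cod C ?x = dom C f"
    using cat_comp[OF assms(1), of u1 p] D assms by auto
  have y: "?y \<in> Arr C" "dom C ?y = dom C u1" "cod C ?y = dom C g"
    using cat_comp[OF assms(1), of u1 q] D assms by auto
  have "comp C f ?x = comp C (comp C f p) u1"
    using cat_assoc[OF assms(1), of u1 p f] D assms by auto
  also have "... = comp C (comp C g q) u1" using D by simp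
  also have "... = comp C g ?y"
    using cat_assoc[OF assms(1), of u1 q g] D assms by auto
  finally have C: "comp C f ?x = comp C g ?y" .
  have "\<exists>!u. u \<in> Arr C \<and> dom C u = dom C ?x \<and> cod C u = dom C p \<and>
              comp C p u = ?x \<and> comp C q u = ?y"
    by (rule pb_univ'[OF assms(2) x(1) y(1)]) (use x y C in simp_all)
  then show ?thesis
  proof (rule ex1E)
    fix u assume "u \<in> Arr C \<and> dom C u = dom C ?x \<and> cod C u = dom C p \<and> comp C p u = ?x \<and> comp C q u = ?y"
      and U: "\<forall>v. v \<in> Arr C \<and> dom C v = dom C ?x \<and> cod C v = dom C p \<and> comp C p v = ?x \<and> comp C q v = ?y \<longrightarrow> v = u"
    have "u1 = u" using U[rule_format, of u1] assms x by simp
    moreover have "u2 = u" using U[rule_format, of u2] assms x by simp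
    ultimately show ?thesis by simp
  qed
qed

lemma pbI:
  assumes "f \<in> Arr C" "g \<in> Arr C" "p \<in> Arr C" "q \<in> Arr C"
     "cod C f = cod C g" "dom C p = dom C q" "cod C p = dom C f" "cod C q = dom C g"
     "comp C f p = comp C g q"
   and ex: "\<And>x y. x \<in> Arr C \<Longrightarrow> y \<in> Arr C \<Longrightarrow> dom C x = dom C y \<Longrightarrow> cod C x = dom C f \<Longrightarrow>
        cod C y = dom C g \<Longrightarrow> comp C f x = comp C g y \<Longrightarrow>
        \<exists>u. u \<in> Arr C \<and> dom C u = dom C x \<and> cod C u = dom C p \<and>
              comp C p u = x \<and> comp C q u = y"
   and un: "\<And>u1 u2. u1 \<in> Arr C \<Longrightarrow> cod C u1 = dom C p \<Longrightarrow> u2 \<in> Arr C \<Longrightarrow> cod C u2 = dom C p \<Longrightarrow>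
      dom C u1 = dom C u2 \<Longrightarrow> comp C p u1 = comp C p u2 \<Longrightarrow> comp C q u1 = comp C q u2 \<Longrightarrow> u1 = u2"
  shows "is_pullback C f g p q"
  unfolding is_pullback_def
proof (intro conjI allI impI)
  fix x y assume H: "x \<in> Arr C \<and> y \<in> Arr C \<and> dom C x = dom C y \<and> cod C x = dom C f \<and>
        cod C y = dom C g \<and> comp C f x = comp C g y"
  then obtain u where u: "u \<in> Arr C \<and> dom C u = dom C x \<and> cod C u = dom C p \<and>
              comp C p u = x \<and> comp C q u = y" using ex by blast
  show "\<exists>!u. u \<in> Arr C \<and> dom C u = dom C x \<and> cod C u = dom C p \<and> comp C p u = x \<and> comp C q u = y"
  proof (rule ex1I[of _ u])
    show "u \<in> Arr C \<and> dom C u = dom C x \<and> cod C u = dom C p \<and> comp C p u = x \<and> comp C q u = y" by (fact u)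
    fix v assume "v \<in> Arr C \<and> dom C v = dom C x \<and> cod C v = dom C p \<and> comp C p v = x \<and> comp C q v = y"
    then show "v = u" using u un[of v u] by auto
  qed
qed (use assms in auto)

lemma poD:
  assumes "is_pushout C f g p q"
  shows "f \<in> Arr C" "g \<in> Arr C" "p \<in> Arr C" "q \<in> Arr C"
     "dom C f = dom C g" "cod C p = cod C q" "dom C p = cod C f" "dom C q = cod C g"
     "comp C p f = comp C q g"
  using assms unfolding is_pushout_def by blast+

lemma monoD:
  assumes "mono C m" "g \<in> Arr C" "h \<in> Arr C" "dom C g = dom C h" "cod C g = dom C m"
        "cod C h = dom C m" "comp C m g = comp C m h"
  shows "g = h"
  using assms unfolding mono_def by blast

lemma mono_cancel:
  assumes C: "category C" and M: "mono C (comp C a m)" and "a \<in> Arr C" "m \<in> Arr C" "dom C a = cod C m"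
  shows "mono C m"
  unfolding mono_def
proof (intro conjI allI impI)
  show "m \<in> Arr C" by fact
  fix g h assume H: "g \<in> Arr C \<and> h \<in> Arr C \<and> dom C g = dom C h \<and> cod C g = dom C m \<and>
        cod C h = dom C m \<and> comp C m g = comp C m h"
  have "comp C (comp C a m) g = comp C (comp C a m) h"
    using H assms cat_assoc[OF C, of g m a] cat_assoc[OF C, of h m a] by simp
  moreover have "dom C (comp C a m) = dom C m" using cat_comp[OF C, of m a] assms by simp
  ultimately show "g = h" using monoD[OF M, of g h] H by simp
qed

lemma pb_comp:
  assumes C: "category C" and L: "is_pullback C f h p q" and R: "is_pullback C g k h b"
  shows "is_pullback C (comp C g f) k p (comp C b q)"
proof -
  note L1 = pbD[OF L] and R1 = pbD[OF R]
  note cc = cat_comp[OF C] and ca = cat_assoc[OF C]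
  have gf: "comp C g f \<in> Arr C" "dom C (comp C g f) = dom C f" "cod C (comp C g f) = cod C g"
    using cc[of f g] L1 R1 by auto
  have bq: "comp C b q \<in> Arr C" "dom C (comp C b q) = dom C q" "cod C (comp C b q) = cod C b"
    using cc[of q b] L1 R1 by auto
  have comm: "comp C (comp C g f) p = comp C k (comp C b q)"
  proof -
    have "comp C (comp C g f) p = comp C g (comp C f p)" using ca[of p f g] L1 R1 by auto
    also have "... = comp C g (comp C h q)" using L1 by simp
    also have "... = comp C (comp C g h) q" using ca[of q h g] L1 R1 by auto
    also have "... = comp C (comp C k b) q" using R1 by simp
    also have "... = comp C k (comp C b q)" using ca[of q b k] L1 R1 by auto
    finally show ?thesis .
  qed
  show ?thesis
  proof (rule pbI)
    fix x y assume x: "x \<in> Arr C" and y: "y \<in> Arr C" and d: "dom C x = dom C y"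
      and cx: "cod C x = dom C (comp C g f)" and cy: "cod C y = dom C k"
      and e: "comp C (comp C g f) x = comp C k y"
    have fx: "comp C f x \<in> Arr C" "dom C (comp C f x) = dom C x" "cod C (comp C f x) = cod C f"
      using cc[of x f] x cx gf L1 by auto
    have e2: "comp C g (comp C f x) = comp C k y" using e ca[of x f g] x cx gf L1 R1 by auto
    obtain v where v: "v \<in> Arr C" "dom C v = dom C (comp C f x)" "cod C v = dom C h"
        "comp C h v = comp C f x" "comp C b v = y"
    proof -
      have "dom C (comp C f x) = dom C y" "cod C (comp C f x) = dom C g" using fx d L1 R1 by auto
      then show ?thesis using pb_ex[OF R fx(1) y _ _ cy e2] that by blast
    qed
    obtain u where u: "u \<in> Arr C" "dom C u = dom C x" "cod C u = dom C p" "comp C p u = x" "comp C q u = v"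
    proof -
      have "dom C x = dom C v" "cod C x = dom C f" "comp C f x = comp C h v" using v fx cx gf by auto
      then show ?thesis using pb_ex[OF L x v(1) _ _ v(3)] that by blast
    qed
    have "comp C (comp C b q) u = y" using ca[of u q b] u v L1 R1 by auto
    then show "\<exists>u. u \<in> Arr C \<and> dom C u = dom C x \<and> cod C u = dom C p \<and> comp C p u = x \<and> comp C (comp C b q) u = y"
      using u by blast
  next
    fix u1 u2 assume u1: "u1 \<in> Arr C" "cod C u1 = dom C p" and u2: "u2 \<in> Arr C" "cod C u2 = dom C p"
      and d: "dom C u1 = dom C u2" and e1: "comp C p u1 = comp C p u2"
      and e2: "comp C (comp C b q) u1 = comp C (comp C b q) u2"
    have m1: "comp C h (comp C q u1) = comp C f (comp C p u1)"
      using ca[of u1 q h] ca[of u1 p f] u1 L1 by auto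
    have m2: "comp C h (comp C q u2) = comp C f (comp C p u2)"
      using ca[of u2 q h] ca[of u2 p f] u2 L1 by auto
    have m3: "comp C b (comp C q u1) = comp C b (comp C q u2)"
      using e2 ca[of u1 q b] ca[of u2 q b] u1 u2 L1 R1 by auto
    have "comp C q u1 = comp C q u2"
    proof (rule pb_uniq[OF C R])
      show "comp C q u1 \<in> Arr C" "comp C q u2 \<in> Arr C" using cc[of u1 q] cc[of u2 q] u1 u2 L1 by auto
      show "cod C (comp C q u1) = dom C h" "cod C (comp C q u2) = dom C h" using cc[of u1 q] cc[of u2 q] u1 u2 L1 by auto
      show "dom C (comp C q u1) = dom C (comp C q u2)" using cc[of u1 q] cc[of u2 q] u1 u2 L1 d by auto
    qed (use e1 m1 m2 m3 in auto)
    then show "u1 = u2" using pb_uniq[OF C L u1(1) u1(2) u2(1) u2(2) d e1] by simp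
  next show "comp C g f \<in> Arr C" by (fact gf(1))
  next show "k \<in> Arr C" by (fact R1(2))
  next show "p \<in> Arr C" by (fact L1(3))
  next show "comp C b q \<in> Arr C" by (fact bq(1))
  next show "cod C (comp C g f) = cod C k" using gf R1 by simp
  next show "dom C p = dom C (comp C b q)" using bq L1 by simp
  next show "cod C p = dom C (comp C g f)" using gf L1 by simp
  next show "cod C (comp C b q) = dom C k" using bq R1 by simp
  next show "comp C (comp C g f) p = comp C k (comp C b q)" by (fact comm)
  qed
qed

lemma pb_cancel:
  assumes C: "category C" and O: "is_pullback C (comp C g f) k p (comp C b q)"
    and R: "is_pullback C g k h b" and f: "f \<in> Arr C" and q: "q \<in> Arr C"
    and cf: "cod C f = dom C g" and cq: "cod C q = dom C h" and dq: "dom C q = dom C p"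
    and comm: "comp C f p = comp C h q"
  shows "is_pullback C f h p q"
proof -
  note O1 = pbD[OF O] and R1 = pbD[OF R]
  note cc = cat_comp[OF C] and ca = cat_assoc[OF C]
  have gf: "dom C (comp C g f) = dom C f" using cc[of f g] f cf R1 by auto
  show ?thesis
  proof (rule pbI)
    fix x y assume x: "x \<in> Arr C" and y: "y \<in> Arr C" and d: "dom C x = dom C y"
      and cx: "cod C x = dom C f" and cy: "cod C y = dom C h"
      and e: "comp C f x = comp C h y"
    have by': "comp C b y \<in> Arr C" "dom C (comp C b y) = dom C y" "cod C (comp C b y) = cod C b"
      using cc[of y b] y cy R1 by auto
    have "comp C (comp C g f) x = comp C g (comp C f x)" using ca[of x f g] x f cx cf R1 by auto
    also have "... = comp C g (comp C h y)" using e by simp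
    also have "... = comp C (comp C g h) y" using ca[of y h g] y cy R1 by auto
    also have "... = comp C (comp C k b) y" using R1 by simp
    also have "... = comp C k (comp C b y)" using ca[of y b k] y cy R1 by auto
    finally have e2: "comp C (comp C g f) x = comp C k (comp C b y)" .
    obtain u where u: "u \<in> Arr C" "dom C u = dom C x" "cod C u = dom C p" "comp C p u = x"
       "comp C (comp C b q) u = comp C b y"
    proof -
      have "dom C x = dom C (comp C b y)" "cod C x = dom C (comp C g f)" "cod C (comp C b y) = dom C k"
        using by' d cx gf R1 by auto
      then show ?thesis using pb_ex[OF O x by'(1) _ _ _ e2] that by blast
    qed
    have qu: "comp C q u \<in> Arr C" "dom C (comp C q u) = dom C u" "cod C (comp C q u) = cod C q"
      using cc[of u q] u q dq by auto
    have "comp C h (comp C q u) = comp C (comp C h q) u" using ca[of u q h] u q dq cq R1 by auto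
    also have "... = comp C (comp C f p) u" using comm by simp
    also have "... = comp C f (comp C p u)" using ca[of u p f] u f O1 gf by auto
    finally have h1: "comp C h (comp C q u) = comp C h y" using u e by simp
    have h2: "comp C b (comp C q u) = comp C b y" using u ca[of u q b] u q dq cq R1 by auto
    have "comp C q u = y"
      using pb_uniq[OF C R qu(1) _ y] qu cq cy u d h1 h2 by auto
    then show "\<exists>u. u \<in> Arr C \<and> dom C u = dom C x \<and> cod C u = dom C p \<and> comp C p u = x \<and> comp C q u = y"
      using u by blast
  next
    fix u1 u2 assume u1: "u1 \<in> Arr C" "cod C u1 = dom C p" and u2: "u2 \<in> Arr C" "cod C u2 = dom C p"
      and d: "dom C u1 = dom C u2" and e1: "comp C p u1 = comp C p u2"
      and e2: "comp C q u1 = comp C q u2"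
    have "comp C (comp C b q) u1 = comp C (comp C b q) u2"
      using e2 ca[of u1 q b] ca[of u2 q b] u1 u2 q dq cq R1 by auto
    then show "u1 = u2" using pb_uniq[OF C O u1(1) u1(2) u2(1) u2(2) d e1] by simp
  next show "f \<in> Arr C" by fact
  next show "h \<in> Arr C" by (fact R1(3))
  next show "p \<in> Arr C" by (fact O1(3))
  next show "q \<in> Arr C" by fact
  next show "cod C f = cod C h" using cf R1 by simp
  next show "dom C p = dom C q" using dq by simp
  next show "cod C p = dom C f" using gf O1 by simp
  next show "cod C q = dom C h" by fact
  next show "comp C f p = comp C h q" by (fact comm)
  qed
qed

lemma main_constr:
  assumes C: "category C" and PB: "has_pullbacks C" and PO: "has_pushouts C"
    and rho: "canonical_rule C \<rho>"
    and M: "mono C tL2" and hb: "hom C \<beta> (cod C tL2) (cod C (r_tL \<rho>))"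
    and dtl: "dom C tL2 = dom C (r_tL \<rho>)" and fac: "r_tL \<rho> = comp C \<beta> tL2"
    and amd: "\<forall>m \<alpha>. mono C m \<and> dom C m = dom C (r_tL \<rho>) \<and> hom C \<alpha> (cod C m) (cod C (r_tL \<rho>)) \<and>
               r_tL \<rho> = comp C \<alpha> m \<longrightarrow>
           (\<exists>\<alpha>'. hom C \<alpha>' (cod C m) (cod C tL2) \<and>
                 comp C \<alpha>' m = tL2 \<and> comp C \<beta> \<alpha>' = \<alpha> \<and> Q m \<alpha>')"
  shows "\<exists>\<sigma>. monic_rule C \<sigma> \<and> r_tL \<sigma> = tL2 \<and> r_l \<sigma> = r_l \<rho> \<and>
            pbpo_rel_mono C \<rho> = pbpo_rel C \<sigma> \<and>
            (\<forall>GL GR. (GL, GR) \<in> pbpo_rel_mono C \<rho> \<longrightarrow> (\<exists>m \<alpha>'. Q m \<alpha>' \<and> pbpo_step C \<sigma> m \<alpha>' GL GR))"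
proof -
  note cc = cat_comp[OF C] and ca = cat_assoc[OF C]
  define l where "l = r_l \<rho>"
  define r where "r = r_r \<rho>"
  define tL where "tL = r_tL \<rho>"
  define tK where "tK = r_tK \<rho>"
  define l' where "l' = r_l' \<rho>"
  have rule: "pbpo_rule C \<rho>" using rho unfolding canonical_rule_def by blast
  have pbL: "is_pullback C tL l' l tK" using rho unfolding canonical_rule_def tL_def l'_def l_def tK_def by blast
  have R: "l \<in> Arr C" "dom C l = dom C l" "r \<in> Arr C" "dom C r = dom C l"
    "tL \<in> Arr C" "dom C tL = cod C l" "tK \<in> Arr C" "dom C tK = dom C l" "cod C tK = dom C l'"
    "l' \<in> Arr C" "cod C l' = cod C tL" "comp C tL l = comp C l' tK"
    using rule unfolding pbpo_rule_def Let_def hom_def l_def r_def tL_def tK_def l'_def by auto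
  have dtl': "dom C tL2 = cod C l" using dtl R(6) tL_def by simp
  have tL2: "tL2 \<in> Arr C" using M unfolding mono_def by blast
  have hb': "\<beta> \<in> Arr C" "dom C \<beta> = cod C tL2" "cod C \<beta> = cod C tL" using hb unfolding hom_def tL_def by auto
  have fac': "tL = comp C \<beta> tL2" using fac tL_def by simp
  obtain l2 b where pbB: "is_pullback C \<beta> l' l2 b"
  proof -
    have "cod C \<beta> = cod C l'" using hb' R by simp
    then have "\<exists>p q. is_pullback C \<beta> l' p q"
      using PB[unfolded has_pullbacks_def, rule_format, OF hb'(1) R(10)] by blast
    then show ?thesis using that by blast
  qed
  note B = pbD[OF pbB]
  have x1: "comp C tL2 l \<in> Arr C" "dom C (comp C tL2 l) = dom C l" "cod C (comp C tL2 l) = cod C tL2"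
    using cc[of l tL2] R tL2 dtl' by auto
  have e1: "comp C \<beta> (comp C tL2 l) = comp C l' tK"
  proof -
    have "comp C \<beta> (comp C tL2 l) = comp C (comp C \<beta> tL2) l"
      by (rule ca) (use R tL2 dtl' hb' in auto)
    also have "... = comp C l' tK" using fac' R(12) by simp
    finally show ?thesis .
  qed
  have h123: "dom C (comp C tL2 l) = dom C tK" "cod C (comp C tL2 l) = dom C \<beta>" "cod C tK = dom C l'"
      using x1(2) R(8) x1(3) hb'(2) R(9) by simp_all
  obtain tK2 where t: "tK2 \<in> Arr C" "dom C tK2 = dom C (comp C tL2 l)" "cod C tK2 = dom C l2"
      "comp C l2 tK2 = comp C tL2 l" "comp C b tK2 = tK"
    by (rule pb_ex[OF pbB x1(1) R(7) h123 e1])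
  have tK2: "tK2 \<in> Arr C" "dom C tK2 = dom C l" "cod C tK2 = dom C l2"
      "comp C l2 tK2 = comp C tL2 l" "comp C b tK2 = tK"
    using t x1(2) by simp_all
  obtain r2 tR2 where po: "is_pushout C tK2 r r2 tR2"
  proof -
    have "dom C tK2 = dom C r" using tK2 R by simp
    then have "\<exists>p q. is_pushout C tK2 r p q"
      using PO[unfolded has_pushouts_def, rule_format, OF tK2(1) R(3)] by blast
    then show ?thesis using that by blast
  qed
  note P = poD[OF po]
  define \<sigma> where "\<sigma> = \<lparr>r_l = l, r_r = r, r_tL = tL2, r_tK = tK2, r_tR = tR2, r_l' = l2, r_r' = r2\<rparr>"
  have ruleS: "pbpo_rule C \<sigma>"
    unfolding pbpo_rule_def Let_def hom_def \<sigma>_def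
    using R tL2 dtl' tK2 P B hb' x1
    by (simp add: r_def[symmetric] l_def[symmetric])
  have pbS: "is_pullback C tL2 l2 l tK2"
  proof (rule pb_cancel[OF C _ pbB tL2 tK2(1)])
    show "is_pullback C (comp C \<beta> tL2) l' l (comp C b tK2)" using pbL fac' tK2 by simp
  qed (use hb' B tK2 in auto)
  have monS: "monic_rule C \<sigma>"
    unfolding monic_rule_def canonical_rule_def using ruleS pbS po M by (simp add: \<sigma>_def)
  have S: "r_l \<sigma> = l" "r_r \<sigma> = r" "r_tL \<sigma> = tL2" "r_tK \<sigma> = tK2" "r_l' \<sigma> = l2"
    by (simp_all add: \<sigma>_def)
  have fwd: "\<exists>m \<alpha>'. Q m \<alpha>' \<and> pbpo_step C \<sigma> m \<alpha>' GL GR"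
    if mm: "mono C m" and st: "pbpo_step C \<rho> m \<alpha> GL GR" for m \<alpha> GL GR
  proof -
    have st': "hom C m (cod C l) GL \<and> hom C \<alpha> GL (cod C tL) \<and> tL = comp C \<alpha> m \<and>
      (\<exists>gL u' u gR w. is_pullback C \<alpha> l' gL u' \<and> hom C u (dom C l) (dom C gL) \<and>
        comp C gL u = comp C m l \<and> comp C u' u = tK \<and> is_pushout C u r gR w \<and> cod C gR = GR)"
      using st unfolding pbpo_step_def l_def r_def tL_def tK_def l'_def by blast
    then have hm: "m \<in> Arr C" "dom C m = cod C l" "cod C m = GL"
      and ha: "\<alpha> \<in> Arr C" "dom C \<alpha> = GL" "cod C \<alpha> = cod C tL"
      and tLa: "tL = comp C \<alpha> m" unfolding hom_def by auto
    from st' obtain gL u' u gR w where pbA: "is_pullback C \<alpha> l' gL u'"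
      and hu: "hom C u (dom C l) (dom C gL)" and eu: "comp C gL u = comp C m l"
      and eu': "comp C u' u = tK" and poA: "is_pushout C u r gR w" and GR: "cod C gR = GR"
      by blast
    have "\<exists>\<alpha>'. hom C \<alpha>' (cod C m) (cod C tL2) \<and> comp C \<alpha>' m = tL2 \<and> comp C \<beta> \<alpha>' = \<alpha> \<and> Q m \<alpha>'"
    proof (rule amd[rule_format])
      show "mono C m \<and> dom C m = dom C (r_tL \<rho>) \<and> hom C \<alpha> (cod C m) (cod C (r_tL \<rho>)) \<and>
               r_tL \<rho> = comp C \<alpha> m"
        using mm hm ha tLa R(6) unfolding tL_def hom_def by auto
    qed
    then obtain \<alpha>' where ha': "\<alpha>' \<in> Arr C" "dom C \<alpha>' = GL" "cod C \<alpha>' = cod C tL2"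
      and am: "comp C \<alpha>' m = tL2" and ba: "comp C \<beta> \<alpha>' = \<alpha>" and Q: "Q m \<alpha>'"
      unfolding hom_def using hm by auto
    note G = pbD[OF pbA]
    have x: "comp C \<alpha>' gL \<in> Arr C" "dom C (comp C \<alpha>' gL) = dom C gL" "cod C (comp C \<alpha>' gL) = cod C tL2"
      using cc[of gL \<alpha>'] G ha' ha by auto
    have ex: "comp C \<beta> (comp C \<alpha>' gL) = comp C l' u'"
    proof -
      have "comp C \<beta> (comp C \<alpha>' gL) = comp C (comp C \<beta> \<alpha>') gL"
        by (rule ca) (use G ha' ha hb' in auto)
      also have "... = comp C l' u'" using ba G(9) by simp
      finally show ?thesis .
    qed
    have h3: "dom C (comp C \<alpha>' gL) = dom C u'" "cod C (comp C \<alpha>' gL) = dom C \<beta>" "cod C u' = dom C l'"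
      using x G hb' by auto
    obtain u2 where u2: "u2 \<in> Arr C" "dom C u2 = dom C (comp C \<alpha>' gL)" "cod C u2 = dom C l2"
        "comp C l2 u2 = comp C \<alpha>' gL" "comp C b u2 = u'"
      by (rule pb_ex[OF pbB x(1) G(4) h3 ex])
    have pbS2: "is_pullback C \<alpha>' l2 gL u2"
    proof (rule pb_cancel[OF C _ pbB ha'(1) u2(1)])
      show "is_pullback C (comp C \<beta> \<alpha>') l' gL (comp C b u2)" using pbA ba u2 by simp
    qed (use ha' hb' u2 x in auto)
    have hu': "u \<in> Arr C" "dom C u = dom C l" "cod C u = dom C gL" using hu unfolding hom_def by auto
    have uu: "comp C u2 u \<in> Arr C" "cod C (comp C u2 u) = dom C l2" "dom C (comp C u2 u) = dom C l"
      using cc[of u u2] hu' u2 x by auto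
    have "comp C l2 (comp C u2 u) = comp C (comp C l2 u2) u"
      by (rule ca) (use hu' u2 x B in auto)
    also have "... = comp C (comp C \<alpha>' gL) u" using u2 by simp
    also have "... = comp C \<alpha>' (comp C gL u)"
      by (rule ca[symmetric]) (use hu' G ha' ha in auto)
    also have "... = comp C \<alpha>' (comp C m l)" using eu by simp
    also have "... = comp C (comp C \<alpha>' m) l"
      by (rule ca) (use hm ha' R in auto)
    also have "... = comp C l2 tK2" using am tK2 by simp
    finally have l2e: "comp C l2 (comp C u2 u) = comp C l2 tK2" .
    have "comp C b (comp C u2 u) = comp C (comp C b u2) u"
      by (rule ca) (use hu' u2 x B in auto)
    also have "... = comp C b tK2" using u2 eu' tK2 by simp
    finally have be: "comp C b (comp C u2 u) = comp C b tK2" .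
    have u2u: "comp C u2 u = tK2"
      by (rule pb_uniq[OF C pbB uu(1) uu(2) tK2(1) tK2(3)]) (use uu tK2 l2e be in auto)
    show ?thesis
    proof (intro exI conjI)
      show "Q m \<alpha>'" by fact
      show "pbpo_step C \<sigma> m \<alpha>' GL GR"
        unfolding pbpo_step_def S
      proof (intro conjI exI)
        show "pbpo_rule C \<sigma>" by fact
        show "hom C m (cod C l) GL" "hom C \<alpha>' GL (cod C tL2)" "tL2 = comp C \<alpha>' m"
          using hm ha' am unfolding hom_def by auto
        show "is_pullback C \<alpha>' l2 gL u2" by fact
        show "hom C u (dom C l) (dom C gL)" by fact
        show "comp C gL u = comp C m l" by fact
        show "comp C u2 u = tK2" by fact
        show "is_pushout C u r gR w" using poA by simp
        show "cod C gR = GR" by fact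
      qed
    qed
  qed
  have bwd: "(GL, GR) \<in> pbpo_rel_mono C \<rho>" if st: "pbpo_step C \<sigma> m \<alpha>' GL GR" for m \<alpha>' GL GR
  proof -
    have st': "hom C m (cod C l) GL \<and> hom C \<alpha>' GL (cod C tL2) \<and> tL2 = comp C \<alpha>' m \<and>
      (\<exists>gL u2 u gR w. is_pullback C \<alpha>' l2 gL u2 \<and> hom C u (dom C l) (dom C gL) \<and>
        comp C gL u = comp C m l \<and> comp C u2 u = tK2 \<and> is_pushout C u r gR w \<and> cod C gR = GR)"
      using st unfolding pbpo_step_def S by blast
    then have hm: "m \<in> Arr C" "dom C m = cod C l" "cod C m = GL"
      and ha': "\<alpha>' \<in> Arr C" "dom C \<alpha>' = GL" "cod C \<alpha>' = cod C tL2"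
      and am: "tL2 = comp C \<alpha>' m" unfolding hom_def by auto
    from st' obtain gL u2 u gR w where pbA: "is_pullback C \<alpha>' l2 gL u2"
      and hu: "hom C u (dom C l) (dom C gL)" and eu: "comp C gL u = comp C m l"
      and eu': "comp C u2 u = tK2" and poA: "is_pushout C u r gR w" and GR: "cod C gR = GR"
      by blast
    note G = pbD[OF pbA]
    have mm: "mono C m"
      by (rule mono_cancel[OF C _ ha'(1) hm(1)]) (use M am ha' hm in auto)
    have pbO: "is_pullback C (comp C \<beta> \<alpha>') l' gL (comp C b u2)" by (rule pb_comp[OF C pbA pbB])
    have hba: "hom C (comp C \<beta> \<alpha>') GL (cod C tL)"
      using cc[of \<alpha>' \<beta>] ha' hb' unfolding hom_def by auto
    have "tL = comp C \<beta> (comp C \<alpha>' m)" using fac' am by simp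
    also have "... = comp C (comp C \<beta> \<alpha>') m" by (rule ca) (use ha' hm hb' in auto)
    finally have tLe: "tL = comp C (comp C \<beta> \<alpha>') m" .
    have hu': "u \<in> Arr C" "dom C u = dom C l" "cod C u = dom C gL" using hu unfolding hom_def by auto
    have "comp C (comp C b u2) u = comp C b (comp C u2 u)"
      by (rule ca[symmetric]) (use hu' G B in auto)
    also have "... = tK" using eu' tK2 by simp
    finally have bu: "comp C (comp C b u2) u = tK" .
    have "pbpo_step C \<rho> m (comp C \<beta> \<alpha>') GL GR"
      unfolding pbpo_step_def l_def[symmetric] r_def[symmetric] tL_def[symmetric] tK_def[symmetric] l'_def[symmetric]
    proof (intro conjI exI)
      show "pbpo_rule C \<rho>" by fact
      show "hom C m (cod C l) GL" using hm unfolding hom_def by auto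
      show "hom C (comp C \<beta> \<alpha>') GL (cod C tL)" by fact
      show "tL = comp C (comp C \<beta> \<alpha>') m" by fact
      show "is_pullback C (comp C \<beta> \<alpha>') l' gL (comp C b u2)" by fact
      show "hom C u (dom C l) (dom C gL)" by fact
      show "comp C gL u = comp C m l" by fact
      show "comp C (comp C b u2) u = tK" by fact
      show "is_pushout C u r gR w" by fact
      show "cod C gR = GR" by fact
    qed
    then show ?thesis using mm unfolding pbpo_rel_mono_def by blast
  qed
  show ?thesis
  proof (rule exI[of _ \<sigma>], intro conjI)
    show "monic_rule C \<sigma>" by fact
    show "r_tL \<sigma> = tL2" "r_l \<sigma> = r_l \<rho>" by (simp_all add: \<sigma>_def l_def)
    show "pbpo_rel_mono C \<rho> = pbpo_rel C \<sigma>"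
      using fwd bwd unfolding pbpo_rel_mono_def pbpo_rel_def by blast
    show "\<forall>GL GR. (GL, GR) \<in> pbpo_rel_mono C \<rho> \<longrightarrow> (\<exists>m \<alpha>'. Q m \<alpha>' \<and> pbpo_step C \<sigma> m \<alpha>' GL GR)"
      using fwd unfolding pbpo_rel_mono_def by blast
  qed
qed

theorem lemma5:
  fixes C :: "('o, 'a) cat"
  assumes "category C" and "has_pullbacks C" and "has_pushouts C"
    and "amendable C"
  shows "(\<forall>\<rho>. canonical_rule C \<rho> \<longrightarrow>
            (\<exists>\<sigma>. monic_rule C \<sigma> \<and> pbpo_rel_mono C \<rho> = pbpo_rel C \<sigma>))
       \<and> (strongly_amendable C \<longrightarrow>
            (\<forall>\<rho>. canonical_rule C \<rho> \<longrightarrow>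
              (\<exists>\<sigma>. monic_rule C \<sigma> \<and> pbpo_rel_mono C \<rho> = pbpo_rel C \<sigma> \<and>
                    pbpo_rel_mono C \<rho> = pbpo_rel_SM C \<sigma>)))"
proof (intro conjI allI impI)
  have tLA: "r_tL \<rho> \<in> Arr C" "dom C (r_tL \<rho>) = cod C (r_l \<rho>)" if "canonical_rule C \<rho>" for \<rho>
    using that unfolding canonical_rule_def pbpo_rule_def Let_def hom_def by auto
  fix \<rho> assume rho: "canonical_rule C \<rho>"
  obtain tL2 \<beta> where M: "mono C tL2" and hb: "hom C \<beta> (cod C tL2) (cod C (r_tL \<rho>))"
      and dtl: "dom C tL2 = dom C (r_tL \<rho>)" and fac: "r_tL \<rho> = comp C \<beta> tL2"
      and amd: "\<forall>m \<alpha>. mono C m \<and> dom C m = dom C (r_tL \<rho>) \<and> hom C \<alpha> (cod C m) (cod C (r_tL \<rho>)) \<and>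
               r_tL \<rho> = comp C \<alpha> m \<longrightarrow>
           (\<exists>\<alpha>'. hom C \<alpha>' (cod C m) (cod C tL2) \<and>
                 comp C \<alpha>' m = tL2 \<and> comp C \<beta> \<alpha>' = \<alpha>)"
    using assms(4)[unfolded amendable_def, rule_format, OF tLA(1)[OF rho]] by blast
  have amd': "\<forall>m \<alpha>. mono C m \<and> dom C m = dom C (r_tL \<rho>) \<and> hom C \<alpha> (cod C m) (cod C (r_tL \<rho>)) \<and>
               r_tL \<rho> = comp C \<alpha> m \<longrightarrow>
           (\<exists>\<alpha>'. hom C \<alpha>' (cod C m) (cod C tL2) \<and>
                 comp C \<alpha>' m = tL2 \<and> comp C \<beta> \<alpha>' = \<alpha> \<and> (\<lambda>_ _. True) m \<alpha>')"
    using amd by simp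
  from main_constr[OF assms(1-3) rho M hb dtl fac amd']
  show "\<exists>\<sigma>. monic_rule C \<sigma> \<and> pbpo_rel_mono C \<rho> = pbpo_rel C \<sigma>" by blast
next
  have tLA: "r_tL \<rho> \<in> Arr C" "dom C (r_tL \<rho>) = cod C (r_l \<rho>)" if "canonical_rule C \<rho>" for \<rho>
    using that unfolding canonical_rule_def pbpo_rule_def Let_def hom_def by auto
  fix \<rho> assume SA: "strongly_amendable C" and rho: "canonical_rule C \<rho>"
  obtain tL2 \<beta> where M: "mono C tL2" and hb: "hom C \<beta> (cod C tL2) (cod C (r_tL \<rho>))"
      and dtl: "dom C tL2 = dom C (r_tL \<rho>)" and fac: "r_tL \<rho> = comp C \<beta> tL2"
      and amd: "\<forall>m \<alpha>. mono C m \<and> dom C m = dom C (r_tL \<rho>) \<and> hom C \<alpha> (cod C m) (cod C (r_tL \<rho>)) \<and>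
               r_tL \<rho> = comp C \<alpha> m \<longrightarrow>
           (\<exists>\<alpha>'. hom C \<alpha>' (cod C m) (cod C tL2) \<and>
                 comp C \<alpha>' m = tL2 \<and> comp C \<beta> \<alpha>' = \<alpha> \<and>
                 (\<lambda>m \<alpha>'. is_pullback C tL2 \<alpha>' (idm C (dom C (r_tL \<rho>))) m) m \<alpha>')"
    using SA[unfolded strongly_amendable_def, rule_format, OF tLA(1)[OF rho]] by auto
  obtain \<sigma> where mon: "monic_rule C \<sigma>" and s1: "r_tL \<sigma> = tL2" and s2: "r_l \<sigma> = r_l \<rho>"
     and eq: "pbpo_rel_mono C \<rho> = pbpo_rel C \<sigma>"
     and Q: "\<forall>GL GR. (GL, GR) \<in> pbpo_rel_mono C \<rho> \<longrightarrow>
        (\<exists>m \<alpha>'. is_pullback C tL2 \<alpha>' (idm C (dom C (r_tL \<rho>))) m \<and> pbpo_step C \<sigma> m \<alpha>' GL GR)"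
    using main_constr[OF assms(1-3) rho M hb dtl fac amd] by auto
  have "pbpo_rel_mono C \<rho> \<subseteq> pbpo_rel_SM C \<sigma>"
  proof
    fix x assume x: "x \<in> pbpo_rel_mono C \<rho>"
    obtain GL GR where xe: "x = (GL, GR)" by (cases x)
    obtain m \<alpha>' where "is_pullback C tL2 \<alpha>' (idm C (dom C (r_tL \<rho>))) m" "pbpo_step C \<sigma> m \<alpha>' GL GR"
      using Q x xe by blast
    then show "x \<in> pbpo_rel_SM C \<sigma>"
      unfolding pbpo_rel_SM_def strong_match_def xe using s1 s2 tLA(2)[OF rho] by auto
  qed
  moreover have "pbpo_rel_SM C \<sigma> \<subseteq> pbpo_rel C \<sigma>"
    unfolding pbpo_rel_SM_def pbpo_rel_def by blast
  ultimately show "\<exists>\<sigma>. monic_rule C \<sigma> \<and> pbpo_rel_mono C \<rho> = pbpo_rel C \<sigma> \<and>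
                    pbpo_rel_mono C \<rho> = pbpo_rel_SM C \<sigma>"
    using mon eq by blast
qed

end
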